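(* As $t\to\infty$, $\mathrm{Prob}\big(2\xi(z)<\xi(Z^{(1)}_t)\ \text{for all } z\in\mathbb Z \text{ with } 0<|z-Z^{(1)}_t|\le\alpha\big)\to1$.
   Context: Fix $\alpha\ge 2$. Let $(\xi_0(z))_{z\in\mathbb Z}$ be i.i.d. Pareto with $\mathrm{Prob}(\xi_0(z)>x)=x^{-\alpha}$, $x\ge1$. Let $p:\mathbb N\to[0,1]$ be eventually nondecreasing with $p(n)\to1$, $q=1-p$. Define $\xi(n)=\xi_0(n)$ for $n\ge0$ and, independently for each $n\ge1$, $\xi(-n)=\xi_0(n)$ with probability $p(n)$, $\xi(-n)=\xi_0(-n)$ with probability $q(n)$. Let $D=\{z\in\mathbb N_0:\xi(z)=\xi(-z)\}$, $\Psi_t(z)=\xi(z)-\frac{|z|}{t}\log\xi(z)$, and $Z^{(1)}_t$ a maximiser of $\Psi_t$ over $D$. *)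

theory Defs
  imports "HOL-Probability.Probability"
begin

text \<open>The potential xi(z) built from the i.i.d. field xi0 and the coins:
  for n >= 1, coin n true means xi(-n) = xi0(n) (probability p(n)),
  coin n false means xi(-n) = xi0(-n).\<close>
definition xi :: "(int \<Rightarrow> 'a \<Rightarrow> real) \<Rightarrow> (nat \<Rightarrow> 'a \<Rightarrow> bool) \<Rightarrow> 'a \<Rightarrow> int \<Rightarrow> real" where
  "xi xi0 coin \<omega> z =
     (if z \<ge> 0 then xi0 z \<omega>
      else if coin (nat (- z)) \<omega> then xi0 (- z) \<omega> else xi0 z \<omega>)"

definition Dset :: "(int \<Rightarrow> 'a \<Rightarrow> real) \<Rightarrow> (nat \<Rightarrow> 'a \<Rightarrow> bool) \<Rightarrow> 'a \<Rightarrow> int set" where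
  "Dset xi0 coin \<omega> = {z. z \<ge> 0 \<and> xi xi0 coin \<omega> z = xi xi0 coin \<omega> (- z)}"

definition Psi :: "(int \<Rightarrow> 'a \<Rightarrow> real) \<Rightarrow> (nat \<Rightarrow> 'a \<Rightarrow> bool) \<Rightarrow> real \<Rightarrow> 'a \<Rightarrow> int \<Rightarrow> real" where
  "Psi xi0 coin t \<omega> z = xi xi0 coin \<omega> z - real_of_int \<bar>z\<bar> / t * ln (xi xi0 coin \<omega> z)"

end

theory Submission
  imports Defs "HOL-Real_Asymp.Real_Asymp"
begin


lemma det:
  fixes xz :: "int \<Rightarrow> 'a \<Rightarrow> real" and coin :: "nat \<Rightarrow> 'a \<Rightarrow> bool" and \<omega> :: 'a
    and t m \<alpha> :: real and N Np K w :: nat and Zv :: int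
  assumes pos: "\<forall>i. xz i \<omega> > 1"
    and t: "t > 0" and m4: "m \<ge> 4"
    and ZD: "Zv \<in> Dset xz coin \<omega>"
    and Zmax: "\<forall>y\<in>Dset xz coin \<omega>. Psi xz coin t \<omega> y \<le> Psi xz coin t \<omega> Zv"
    and w1: "1 \<le> w" "w \<le> Np" "coin w \<omega>" "2*m < xz (int w) \<omega>" "xz (int w) \<omega> \<le> 4*m"
    and E2: "real Np * ln (4*m) \<le> t*m"
    and A2: "\<forall>n::nat. N < n \<longrightarrow> \<not> (real n * ln m / (2*t) < xz (int n) \<omega>)"
    and A4: "\<forall>i::nat. i \<le> K \<longrightarrow> \<not> (m/2 < xz (int i) \<omega>)"
    and A3: "\<forall>i::nat. i \<le> N \<longrightarrow> (\<forall>d::nat. 1 \<le> d \<and> d \<le> K \<longrightarrow>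
               \<not> (m/4 < xz (int i) \<omega> \<and> m/4 < xz (int (i+d)) \<omega>))"
    and K: "K = nat \<lfloor>\<alpha>\<rfloor>" and al: "\<alpha> \<ge> 0"
  shows "\<forall>z::int. 0 < \<bar>z - Zv\<bar> \<and> real_of_int \<bar>z - Zv\<bar> \<le> \<alpha> \<longrightarrow>
           2 * xi xz coin \<omega> z < xi xz coin \<omega> Zv"
proof -
  have wD: "int w \<in> Dset xz coin \<omega>"
    using w1 by (simp add: Dset_def xi_def)
  define x where "x = xz (int w) \<omega>"
  have lnx: "0 \<le> ln x" "ln x \<le> ln (4*m)" using w1 m4 by (auto simp: x_def)
  have "real w / t * ln x \<le> real Np / t * ln (4*m)"
    using lnx w1 t m4 by (intro mult_mono divide_right_mono) auto
  also have "\<dots> \<le> m" using E2 t by (simp add: divide_simps mult.commute)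
  finally have "Psi xz coin t \<omega> (int w) \<ge> m"
    using w1 by (simp add: Psi_def xi_def x_def)
  with Zmax wD have PZ: "Psi xz coin t \<omega> Zv \<ge> m" by force
  have Z0: "Zv \<ge> 0" using ZD by (simp add: Dset_def)
  define y where "y = xz Zv \<omega>"
  have xiZ: "xi xz coin \<omega> Zv = y" using Z0 by (simp add: xi_def y_def)
  have y1: "y > 1" using pos by (simp add: y_def)
  have PZ': "y - real_of_int Zv / t * ln y \<ge> m" using PZ Z0 by (simp add: Psi_def xiZ)
  have "real_of_int Zv / t * ln y \<ge> 0" using y1 Z0 t by simp
  hence ym: "y \<ge> m" using PZ' by linarith
  have lnm: "ln m > 0" using m4 by simp
  have "Zv \<le> int N"
  proof (rule ccontr)
    assume "\<not> Zv \<le> int N"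
    hence ZN: "N < nat Zv" by simp
    have "real_of_int Zv / t * ln m \<le> real_of_int Zv / t * ln y"
      using ym m4 Z0 t by (intro mult_left_mono) auto
    hence "y \<ge> real_of_int Zv / t * ln m" using PZ' ym m4 by linarith
    moreover have "real_of_int Zv * ln m / (2*t) < real_of_int Zv / t * ln m"
      using ZN lnm t by (simp add: divide_simps)
    ultimately have "real (nat Zv) * ln m / (2*t) < xz (int (nat Zv)) \<omega>"
      using Z0 by (simp add: y_def)
    thus False using A2 ZN by blast
  qed
  have ZK: "Zv > int K"
  proof (rule ccontr)
    assume "\<not> Zv > int K"
    hence "nat Zv \<le> K" by simp
    moreover have "m/2 < xz (int (nat Zv)) \<omega>" using ym lnm Z0 m4 by (simp add: y_def)
    ultimately show False using A4 by blast
  qed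
  have ZKa: "real_of_int Zv > \<alpha>"
  proof -
    have "Zv \<ge> \<lfloor>\<alpha>\<rfloor> + 1" using ZK K al by simp
    thus ?thesis by linarith
  qed
  show ?thesis
  proof (intro allI impI)
    fix z :: int assume h: "0 < \<bar>z - Zv\<bar> \<and> real_of_int \<bar>z - Zv\<bar> \<le> \<alpha>"
    hence zpos: "z > 0" using ZKa by linarith
    have dK: "\<bar>z - Zv\<bar> \<le> int K" using h K al by linarith
    have xiz: "xi xz coin \<omega> z = xz z \<omega>" using zpos by (simp add: xi_def)
    show "2 * xi xz coin \<omega> z < xi xz coin \<omega> Zv"
    proof (rule ccontr)
      assume "\<not> ?thesis"
      hence zb: "m/4 < xz z \<omega>" using xiz xiZ ym m4 by simp
      have yb: "m/4 < xz Zv \<omega>" using ym m4 by (simp add: y_def)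
      show False
      proof (cases "z > Zv")
        case True
        have "m/4 < xz (int (nat Zv)) \<omega> \<and> m/4 < xz (int (nat Zv + nat (z - Zv))) \<omega>"
          using zb yb Z0 True by (simp add: nat_add_distrib[symmetric])
        moreover have "nat Zv \<le> N" using \<open>Zv \<le> int N\<close> by simp
        moreover have "1 \<le> nat (z - Zv) \<and> nat (z - Zv) \<le> K" using True dK by linarith
        ultimately show False using A3 by blast
      next
        case False
        hence zl: "z < Zv" using h by auto
        have "m/4 < xz (int (nat z)) \<omega> \<and> m/4 < xz (int (nat z + nat (Zv - z))) \<omega>"
          using zb yb zpos zl by (simp add: nat_add_distrib[symmetric])
        moreover have "nat z \<le> N" using \<open>Zv \<le> int N\<close> zl by simp
        moreover have "1 \<le> nat (Zv - z) \<and> nat (Zv - z) \<le> K" using zl dK by linarith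
        ultimately show False using A3 by blast
      qed
    qed
  qed
qed



locale setting = prob_space M for M :: "'a measure" +
  fixes \<alpha> :: real and xi0 :: "int \<Rightarrow> 'a \<Rightarrow> real" and coin :: "nat \<Rightarrow> 'a \<Rightarrow> bool"
  assumes alpha: "\<alpha> \<ge> 2"
    and indep: "indep_vars (\<lambda>_. borel)
          (\<lambda>i. case i of Inl z \<Rightarrow> xi0 z | Inr n \<Rightarrow> (\<lambda>\<omega>. of_bool (coin n \<omega>) :: real))
          (UNIV :: (int + nat) set)"
    and pareto: "\<And>z x. x \<ge> 1 \<Longrightarrow>
          measure M {\<omega> \<in> space M. xi0 z \<omega> > x} = x powr (- \<alpha>)"
begin

abbreviation "X \<equiv> (\<lambda>i. case i of Inl z \<Rightarrow> xi0 z | Inr n \<Rightarrow> (\<lambda>\<omega>. of_bool (coin n \<omega>) :: real))"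

lemma X_meas: "X i \<in> borel_measurable M"
  using indep unfolding indep_vars_def2 by auto

lemma xi0_meas[measurable]: "xi0 z \<in> borel_measurable M"
  using X_meas[of "Inl z"] by simp

lemma coin_meas_real: "(\<lambda>\<omega>. of_bool (coin n \<omega>) :: real) \<in> borel_measurable M"
  using X_meas[of "Inr n"] by simp

lemma coin_pred[measurable]: "Measurable.pred M (coin n)"
proof -
  have "{\<omega> \<in> space M. coin n \<omega>} = (\<lambda>\<omega>. of_bool (coin n \<omega>) :: real) -` {1} \<inter> space M"
    by auto
  also have "\<dots> \<in> sets M" using coin_meas_real by (rule measurable_sets) auto
  finally show ?thesis by (simp add: pred_def)
qed

lemma xi_meas[measurable]: "(\<lambda>\<omega>. xi xi0 coin \<omega> z) \<in> borel_measurable M"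
  unfolding xi_def by measurable

lemma indep_sets2: "indep_sets (\<lambda>i. {X i -` A \<inter> space M | A. A \<in> sets borel}) UNIV"
  using indep unfolding indep_vars_def2 by auto

lemma gt_eq: "{\<omega> \<in> space M. a < xi0 z \<omega>} = X (Inl z) -` {a<..} \<inter> space M"
  by auto

lemma pair_indep:
  assumes "i \<noteq> j"
  shows "prob {\<omega> \<in> space M. a < xi0 i \<omega> \<and> b < xi0 j \<omega>} =
         prob {\<omega> \<in> space M. a < xi0 i \<omega>} * prob {\<omega> \<in> space M. b < xi0 j \<omega>}"
proof -
  let ?A = "\<lambda>k. if k = Inl i then X (Inl i) -` {a<..} \<inter> space M else X (Inl j) -` {b<..} \<inter> space M"
  have "prob (\<Inter>k\<in>{Inl i, Inl j :: int + nat}. ?A k) = (\<Prod>k\<in>{Inl i, Inl j :: int + nat}. prob (?A k))"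
    apply (rule indep_setsD[OF indep_sets2]) apply auto apply (rule exI conjI refl | simp)+ done
  moreover have "(\<Inter>k\<in>{Inl i, Inl j :: int + nat}. ?A k) = {\<omega> \<in> space M. a < xi0 i \<omega> \<and> b < xi0 j \<omega>}"
    using assms by auto
  ultimately show ?thesis using assms by (simp add: gt_eq)
qed

lemma coin_indep:
  shows "prob {\<omega> \<in> space M. coin n \<omega> \<and> a < xi0 (int n) \<omega> \<and> xi0 (int n) \<omega> \<le> b} =
         prob {\<omega> \<in> space M. coin n \<omega>} * prob {\<omega> \<in> space M. a < xi0 (int n) \<omega> \<and> xi0 (int n) \<omega> \<le> b}"
proof -
  let ?A = "\<lambda>k. if k = Inr n then X (Inr n) -` {1} \<inter> space M else X (Inl (int n)) -` {a<..b} \<inter> space M"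
  have "prob (\<Inter>k\<in>{Inr n, Inl (int n)}. ?A k) = (\<Prod>k\<in>{Inr n, Inl (int n)}. prob (?A k))"
    by (rule indep_setsD[OF indep_sets2]) auto
  moreover have "(\<Inter>k\<in>{Inr n, Inl (int n)}. ?A k) = {\<omega> \<in> space M. coin n \<omega> \<and> a < xi0 (int n) \<omega> \<and> xi0 (int n) \<omega> \<le> b}"
    by auto
  moreover have "X (Inr n) -` {1} \<inter> space M = {\<omega> \<in> space M. coin n \<omega>}" by auto
  moreover have "X (Inl (int n)) -` {a<..b} \<inter> space M = {\<omega> \<in> space M. a < xi0 (int n) \<omega> \<and> xi0 (int n) \<omega> \<le> b}" by auto
  ultimately show ?thesis by simp
qed

lemma range_prob:
  assumes "1 \<le> a" "a \<le> b"
  shows "prob {\<omega> \<in> space M. a < xi0 z \<omega> \<and> xi0 z \<omega> \<le> b} = a powr (-\<alpha>) - b powr (-\<alpha>)"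
proof -
  have "{\<omega> \<in> space M. a < xi0 z \<omega> \<and> xi0 z \<omega> \<le> b} =
        {\<omega> \<in> space M. a < xi0 z \<omega>} - {\<omega> \<in> space M. b < xi0 z \<omega>}" by auto
  moreover have "prob ({\<omega> \<in> space M. a < xi0 z \<omega>} - {\<omega> \<in> space M. b < xi0 z \<omega>}) =
     prob {\<omega> \<in> space M. a < xi0 z \<omega>} - prob {\<omega> \<in> space M. b < xi0 z \<omega>}"
    using assms by (intro finite_measure_Diff) auto
  ultimately show ?thesis using assms pareto by simp
qed

lemma AE_pos: "AE \<omega> in M. \<forall>i. xi0 i \<omega> > 1"
proof (subst AE_all_countable, intro allI)
  fix i
  have "prob {\<omega> \<in> space M. 1 < xi0 i \<omega>} = 1" using pareto[of 1 i] by simp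
  from AE_prob_1[OF this] show "AE \<omega> in M. 1 < xi0 i \<omega>" by auto
qed

lemma prod_indep:
  assumes J: "finite J" "J \<noteq> {}"
  shows "prob (\<Inter>w\<in>J. {\<omega>\<in>space M. \<not> (coin w \<omega> \<and> a < xi0 (int w) \<omega> \<and> xi0 (int w) \<omega> \<le> b)})
     = (\<Prod>w\<in>J. prob {\<omega>\<in>space M. \<not> (coin w \<omega> \<and> a < xi0 (int w) \<omega> \<and> xi0 (int w) \<omega> \<le> b)})"
proof -
  define KK where "KK = (\<lambda>w::nat. {Inl (int w), Inr w :: int + nat})"
  define Y where "Y = (\<lambda>j \<omega>. restrict (\<lambda>i. X i \<omega>) (KK j))"
  have "disjoint_family_on KK J" unfolding KK_def disjoint_family_on_def by auto
  then have ind2: "indep_vars (\<lambda>j. PiM (KK j) (\<lambda>_. borel)) Y J"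
    unfolding Y_def by (intro indep_vars_restrict[OF indep]) auto
  then have ind3: "indep_sets (\<lambda>j. {Y j -` A \<inter> space M | A. A \<in> sets (PiM (KK j) (\<lambda>_. borel))}) J"
    unfolding indep_vars_def2 by auto
  define B where "B = (\<lambda>w. {f \<in> space (PiM (KK w) (\<lambda>_. borel)).
       \<not> (f (Inr w) = (1::real) \<and> a < f (Inl (int w)) \<and> f (Inl (int w)) \<le> b)})"
  have Bs: "B w \<in> sets (PiM (KK w) (\<lambda>_. borel))" for w
  proof -
    have [measurable]: "(\<lambda>f. f (Inr w)) \<in> borel_measurable (PiM (KK w) (\<lambda>_. borel))"
      by (rule measurable_component_singleton) (simp add: KK_def)
    have [measurable]: "(\<lambda>f. f (Inl (int w))) \<in> borel_measurable (PiM (KK w) (\<lambda>_. borel))"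
      by (rule measurable_component_singleton) (simp add: KK_def)
    show ?thesis unfolding B_def by measurable
  qed
  have YB: "Y w -` B w \<inter> space M = {\<omega>\<in>space M. \<not> (coin w \<omega> \<and> a < xi0 (int w) \<omega> \<and> xi0 (int w) \<omega> \<le> b)}" for w
    by (auto simp: Y_def B_def KK_def space_PiM)
  have "prob (\<Inter>w\<in>J. Y w -` B w \<inter> space M) = (\<Prod>w\<in>J. prob (Y w -` B w \<inter> space M))"
    using Bs by (intro indep_setsD[OF ind3]) (auto simp: J)
  then show ?thesis by (simp add: YB)
qed

lemma A4_bound:
  assumes "c \<ge> 1"
  shows "prob (\<Union>i\<in>{..K::nat}. {\<omega>\<in>space M. c < xi0 (int i) \<omega>}) \<le> (real K + 1) * c powr (-\<alpha>)"
proof -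
  have "prob (\<Union>i\<in>{..K::nat}. {\<omega>\<in>space M. c < xi0 (int i) \<omega>}) \<le> (\<Sum>i\<in>{..K}. prob {\<omega>\<in>space M. c < xi0 (int i) \<omega>})"
    by (intro finite_measure_subadditive_finite) auto
  also have "\<dots> = (real K + 1) * c powr (-\<alpha>)" using pareto assms by simp
  finally show ?thesis .
qed

lemma A3_bound:
  assumes "c \<ge> 1"
  shows "prob (\<Union>(i,d)\<in>{..N::nat}\<times>{1..K::nat}. {\<omega>\<in>space M. c < xi0 (int i) \<omega> \<and> c < xi0 (int (i+d)) \<omega>})
     \<le> (real N + 1) * real K * (c powr (-\<alpha>))^2"
proof -
  have "prob (\<Union>(i,d)\<in>{..N::nat}\<times>{1..K::nat}. {\<omega>\<in>space M. c < xi0 (int i) \<omega> \<and> c < xi0 (int (i+d)) \<omega>})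
     \<le> (\<Sum>(i,d)\<in>{..N::nat}\<times>{1..K::nat}. prob {\<omega>\<in>space M. c < xi0 (int i) \<omega> \<and> c < xi0 (int (i+d)) \<omega>})"
  proof -
    define A where "A = (\<lambda>(i::nat,d::nat). {\<omega>\<in>space M. c < xi0 (int i) \<omega> \<and> c < xi0 (int (i+d)) \<omega>})"
    have "prob (\<Union>x\<in>{..N::nat}\<times>{1..K::nat}. A x) \<le> (\<Sum>x\<in>{..N::nat}\<times>{1..K::nat}. prob (A x))"
      by (rule finite_measure_subadditive_finite) (auto simp: A_def)
    moreover have "(\<Sum>x\<in>{..N::nat}\<times>{1..K::nat}. prob (A x)) = (\<Sum>(i,d)\<in>{..N::nat}\<times>{1..K::nat}. prob {\<omega>\<in>space M. c < xi0 (int i) \<omega> \<and> c < xi0 (int (i+d)) \<omega>})"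
      by (intro sum.cong) (auto simp: A_def)
    moreover have "(\<Union>x\<in>{..N::nat}\<times>{1..K::nat}. A x) = (\<Union>(i,d)\<in>{..N::nat}\<times>{1..K::nat}. {\<omega>\<in>space M. c < xi0 (int i) \<omega> \<and> c < xi0 (int (i+d)) \<omega>})"
      by (auto simp: A_def)
    ultimately show ?thesis by simp
  qed
  also have "\<dots> = (\<Sum>(i,d)\<in>{..N::nat}\<times>{1..K::nat}. (c powr (-\<alpha>))^2)"
  proof (intro sum.cong refl)
    fix x assume "x \<in> {..N::nat}\<times>{1..K::nat}"
    then obtain i d where x: "x = (i,d)" "1 \<le> d" by auto
    have "int i \<noteq> int (i+d)" using x by simp
    then show "(case x of (i,d) \<Rightarrow> prob {\<omega>\<in>space M. c < xi0 (int i) \<omega> \<and> c < xi0 (int (i+d)) \<omega>}) =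
        (case x of (i,d) \<Rightarrow> (c powr (-\<alpha>))^2)"
      using x pareto assms by (simp add: pair_indep power2_eq_square)
  qed
  also have "\<dots> = (real N + 1) * real K * (c powr (-\<alpha>))^2" by (simp add: algebra_simps)
  finally show ?thesis .
qed

lemma tail_sum:
  assumes "N \<ge> (1::nat)"
  shows "(\<Sum>n<k. if N < n then 1 / (real n)^2 else 0) \<le> 1 / real N - 1 / max (real N) (real k - 1)"
proof (induction k)
  case 0 then show ?case using assms by simp
next
  case (Suc k)
  show ?case
  proof (cases "N < k")
    case True
    have "1 / (real k)^2 \<le> 1/(real k - 1) - 1 / real k"
      using True assms by (simp add: divide_simps power2_eq_square)
    moreover have "max (real N) (real k - 1) = real k - 1" using True by simp
    moreover have "max (real N) (real (Suc k) - 1) = real k" using True by simp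
    ultimately show ?thesis using Suc True by simp
  next
    case False
    have "max (real N) (real k - 1) = real N" using False by simp
    moreover have "max (real N) (real (Suc k) - 1) = real N" using False by simp
    ultimately show ?thesis using Suc False by simp
  qed
qed

lemma A2_bound:
  assumes c: "c > 0" and N: "N \<ge> (1::nat)" and Nc: "(real N + 1) * c \<ge> 1"
  shows "prob (\<Union>n\<in>{N<..}. {\<omega>\<in>space M. real n * c < xi0 (int n) \<omega>}) \<le> 1 / (c^2 * real N)"
proof -
  define A where "A = (\<lambda>n::nat. if N < n then {\<omega>\<in>space M. real n * c < xi0 (int n) \<omega>} else {})"
  define g where "g = (\<lambda>n::nat. if N < n then 1 / (c^2 * (real n)^2) else 0)"
  have U: "(\<Union>n\<in>{N<..}. {\<omega>\<in>space M. real n * c < xi0 (int n) \<omega>}) = (\<Union>n. A n)"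
    by (auto simp: A_def split: if_splits)
  have Ag: "prob (A n) \<le> g n" for n
  proof (cases "N < n")
    case True
    have ge1: "real n * c \<ge> 1"
    proof -
      have "real n \<ge> real N + 1" using True by simp
      hence "real n * c \<ge> (real N + 1) * c" using c by (intro mult_right_mono) auto
      thus ?thesis using Nc by linarith
    qed
    have "(real n * c) powr (-\<alpha>) \<le> (real n * c) powr (-2)"
      using ge1 alpha by (intro powr_mono) auto
    also have "\<dots> = 1 / (c^2 * (real n)^2)"
      using ge1 by (simp add: powr_minus powr_realpow divide_simps power_mult_distrib mult.commute)
    finally show ?thesis using True ge1 pareto by (simp add: A_def g_def)
  qed (simp add: A_def g_def)
  have gpart: "(\<Sum>n<k. g n) \<le> 1 / (c^2 * real N)" for k
  proof -
    have "(\<Sum>n<k. g n) = (1/c^2) * (\<Sum>n<k. if N < n then 1 / (real n)^2 else 0)"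
      by (auto simp: g_def sum_distrib_left intro!: sum.cong)
    also have "\<dots> \<le> (1/c^2) * (1 / real N)"
    proof (intro mult_left_mono)
      have "(\<Sum>n<k. if N < n then 1 / (real n)^2 else 0) \<le> 1 / real N - 1 / max (real N) (real k - 1)"
        by (rule tail_sum[OF N])
      moreover have "1 / max (real N) (real k - 1) \<ge> 0" using N by simp
      ultimately show "(\<Sum>n<k. if N < n then 1 / (real n)^2 else 0) \<le> 1 / real N" by linarith
    qed simp
    finally show ?thesis by simp
  qed
  have g0: "0 \<le> g n" for n by (simp add: g_def)
  have sg: "summable g" by (rule summableI_nonneg_bounded[OF g0 gpart])
  have sA: "summable (\<lambda>n. prob (A n))"
    by (rule summable_comparison_test'[OF sg]) (use Ag in auto)
  have "prob (\<Union>n. A n) \<le> (\<Sum>n. prob (A n))"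
    by (rule finite_measure_subadditive_countably[OF _ sA]) (auto simp: A_def)
  also have "\<dots> \<le> (\<Sum>n. g n)" by (rule suminf_le[OF Ag sA sg])
  also have "\<dots> \<le> 1 / (c^2 * real N)" by (rule suminf_le_const[OF sg gpart])
  finally show ?thesis using U by simp
qed

lemma A1_bound:
  assumes J: "finite J" "J \<noteq> {}" and pc: "\<And>w. w \<in> J \<Longrightarrow> prob {\<omega>\<in>space M. coin w \<omega>} \<ge> 1/2"
    and ab: "1 \<le> a" "a \<le> b"
  shows "prob (\<Inter>w\<in>J. {\<omega>\<in>space M. \<not> (coin w \<omega> \<and> a < xi0 (int w) \<omega> \<and> xi0 (int w) \<omega> \<le> b)})
     \<le> exp (- ((a powr (-\<alpha>) - b powr (-\<alpha>)) / 2) * real (card J))"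
proof -
  define q where "q = a powr (-\<alpha>) - b powr (-\<alpha>)"
  have q0: "0 \<le> q" unfolding q_def using ab alpha by (intro diff_ge_0_iff_ge[THEN iffD2] powr_mono2') auto
  have q1: "q \<le> 1"
  proof -
    have "a powr (-\<alpha>) \<le> a powr 0" using ab alpha by (intro powr_mono) auto
    hence "a powr (-\<alpha>) \<le> 1" using ab by simp
    moreover have "b powr (-\<alpha>) \<ge> 0" by simp
    ultimately show ?thesis unfolding q_def by linarith
  qed
  have each: "prob {\<omega>\<in>space M. \<not> (coin w \<omega> \<and> a < xi0 (int w) \<omega> \<and> xi0 (int w) \<omega> \<le> b)} \<le> 1 - q/2"
    if "w \<in> J" for w
  proof -
    have "{\<omega>\<in>space M. \<not> (coin w \<omega> \<and> a < xi0 (int w) \<omega> \<and> xi0 (int w) \<omega> \<le> b)} =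
          space M - {\<omega>\<in>space M. coin w \<omega> \<and> a < xi0 (int w) \<omega> \<and> xi0 (int w) \<omega> \<le> b}" by auto
    hence "prob {\<omega>\<in>space M. \<not> (coin w \<omega> \<and> a < xi0 (int w) \<omega> \<and> xi0 (int w) \<omega> \<le> b)} =
        1 - prob {\<omega>\<in>space M. coin w \<omega>} * q"
      using ab by (simp add: prob_compl coin_indep range_prob q_def)
    moreover have "prob {\<omega>\<in>space M. coin w \<omega>} * q \<ge> 1/2 * q"
      using pc[OF that] q0 by (intro mult_right_mono) auto
    ultimately show ?thesis by simp
  qed
  have "prob (\<Inter>w\<in>J. {\<omega>\<in>space M. \<not> (coin w \<omega> \<and> a < xi0 (int w) \<omega> \<and> xi0 (int w) \<omega> \<le> b)})
     = (\<Prod>w\<in>J. prob {\<omega>\<in>space M. \<not> (coin w \<omega> \<and> a < xi0 (int w) \<omega> \<and> xi0 (int w) \<omega> \<le> b)})"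
    by (rule prod_indep[OF J])
  also have "\<dots> \<le> (\<Prod>w\<in>J. 1 - q/2)"
    by (intro prod_mono conjI each) auto
  also have "\<dots> = (1 - q/2) ^ card J" by simp
  also have "\<dots> \<le> (exp (- (q/2))) ^ card J"
    using q1 by (intro power_mono) (auto simp: exp_ge_add_one_self[of "-(q/2)", simplified])
  also have "\<dots> = exp (- (q/2) * real (card J))" by (simp add: exp_of_nat_mult[symmetric] mult.commute)
  finally show ?thesis by (simp add: q_def)
qed

end



definition Fb :: "real \<Rightarrow> nat \<Rightarrow> real \<Rightarrow> real" where
  "Fb \<alpha> K0 t = exp (- ((2 powr (-\<alpha>) - 4 powr (-\<alpha>)) / 2) * ((t*(ln t)^3 - real K0)/(t*(ln t)^2)))
     + 4*t^2/(t^2*(ln t)^2 - 1)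
     + (t^2*(ln t)^2+1) * real (nat \<lfloor>\<alpha>\<rfloor>) * (4 powr \<alpha>)^2 / (t^2*(ln t)^4)
     + (real (nat \<lfloor>\<alpha>\<rfloor>) + 1) * 2 powr \<alpha> / (t*(ln t)^2)"

context setting begin

lemma main_bound:
  fixes t Y :: real and K0 :: nat and Z :: "'a \<Rightarrow> int"
  assumes K0: "K0 \<ge> 1" "\<forall>n\<ge>K0. prob {\<omega>\<in>space M. coin n \<omega>} \<ge> 1/2"
    and Y: "Y \<ge> 1" "\<forall>y\<ge>Y. \<alpha>^3 * (ln y)^3 * ln (4*y) \<le> y"
    and t: "t \<ge> exp 1" "t \<ge> 4 powr \<alpha>" "t \<ge> Y powr \<alpha>" "t \<ge> real K0 + 2"
    and Zm: "Z \<in> M \<rightarrow>\<^sub>M count_space UNIV"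
    and Zmax: "AE \<omega> in M. Z \<omega> \<in> Dset xi0 coin \<omega> \<and>
          (\<forall>y \<in> Dset xi0 coin \<omega>. Psi xi0 coin t \<omega> y \<le> Psi xi0 coin t \<omega> (Z \<omega>))"
  shows "measure M {\<omega> \<in> space M. \<forall>z::int.
             0 < \<bar>z - Z \<omega>\<bar> \<and> real_of_int \<bar>z - Z \<omega>\<bar> \<le> \<alpha> \<longrightarrow>
               2 * xi xi0 coin \<omega> z < xi xi0 coin \<omega> (Z \<omega>)} \<ge> 1 - Fb \<alpha> K0 t"
proof -
  define L where "L = ln t"
  have t0: "t > 0" using t(4) by simp
  have L1: "L \<ge> 1" unfolding L_def using t(1) t0 by (subst ln_ge_iff) auto
  have t3: "t \<ge> 3" using t(4) K0 by simp
  define u where "u = t * L^2"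
  have u_t: "u \<ge> t" unfolding u_def using L1 t0 by (simp add: one_le_power)
  have u0: "u > 0" using u_t t0 by simp
  define m where "m = u powr (1/\<alpha>)"
  have a0: "\<alpha> > 0" using alpha by simp
  have m_pow: "m powr \<alpha> = u" unfolding m_def using u0 a0 by (simp add: powr_powr)
  have m_t: "m \<ge> t powr (1/\<alpha>)" unfolding m_def using u_t t0 a0 by (intro powr_mono2) auto
  have m4: "m \<ge> 4"
  proof -
    have "(4 powr \<alpha>) powr (1/\<alpha>) \<le> t powr (1/\<alpha>)" using t(2) a0 by (intro powr_mono2) auto
    moreover have "(4 powr \<alpha>) powr (1/\<alpha>) = 4" using a0 by (simp add: powr_powr)
    ultimately show ?thesis using m_t by linarith
  qed
  have mY: "m \<ge> Y"
  proof -
    have "(Y powr \<alpha>) powr (1/\<alpha>) \<le> t powr (1/\<alpha>)" using t(3) a0 by (intro powr_mono2) auto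
    moreover have "(Y powr \<alpha>) powr (1/\<alpha>) = Y" using a0 Y(1) by (simp add: powr_powr)
    ultimately show ?thesis using m_t by linarith
  qed
  have m0: "m > 0" using m4 by simp
  have lnm1: "ln m \<ge> 1"
  proof -
    have "exp 1 \<le> (3::real)" by (rule exp_le)
    thus ?thesis using m4 m0 by (subst ln_ge_iff) auto
  qed
  have L_lnm: "L \<le> \<alpha> * ln m"
  proof -
    have "ln (t powr (1/\<alpha>)) \<le> ln m" using m_t t0 m0 by (subst ln_le_cancel_iff) auto
    hence "L / \<alpha> \<le> ln m" using t0 by (simp add: L_def ln_powr)
    thus ?thesis using a0 by (simp add: divide_simps mult.commute)
  qed
  define K where "K = nat \<lfloor>\<alpha>\<rfloor>"
  define N where "N = nat \<lfloor>t^2 * L^2\<rfloor>"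
  define N' where "N' = nat \<lfloor>t * L^3\<rfloor>"
  have tL2: "t^2 * L^2 \<ge> 9"
  proof -
    have "t^2 \<ge> 3^2" using t3 by (intro power_mono) auto
    moreover have "L^2 \<ge> 1" using L1 by (simp add: one_le_power)
    ultimately have "t^2 * L^2 \<ge> 9 * 1" by (intro mult_mono) auto
    thus ?thesis by simp
  qed
  have N_lo: "real N \<ge> t^2 * L^2 - 1" "real N \<le> t^2 * L^2" unfolding N_def using tL2 by linarith+
  have tL3: "t * L^3 \<ge> t" using L1 t0 by (simp add: one_le_power)
  have N'_lo: "real N' \<ge> t * L^3 - 1" "real N' \<le> t * L^3" unfolding N'_def using tL3 t0 by linarith+
  have N1: "N \<ge> 1" using N_lo tL2 by linarith
  have N'K0: "N' \<ge> K0" using N'_lo tL3 t(4) by linarith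
  have E2c: "real N' * ln (4*m) \<le> t*m"
  proof -
    have l4: "ln (4*m) \<ge> 0" using m4 by simp
    have "L^3 \<le> (\<alpha> * ln m)^3" using L_lnm L1 by (intro power_mono) auto
    hence "L^3 * ln (4*m) \<le> \<alpha>^3 * (ln m)^3 * ln (4*m)"
      using l4 by (simp add: power_mult_distrib mult_right_mono)
    also have "\<dots> \<le> m" using Y(2) mY by blast
    finally have "L^3 * ln (4*m) \<le> m" .
    hence "t * (L^3 * ln (4*m)) \<le> t * m" using t0 by (intro mult_left_mono) auto
    moreover have "real N' * ln (4*m) \<le> t * L^3 * ln (4*m)"
      using N'_lo l4 by (intro mult_right_mono) auto
    ultimately show ?thesis by (simp add: mult.assoc)
  qed
  define J where "J = {K0..N'}"
  define G where "G = (\<Inter>w\<in>J. {\<omega>\<in>space M. \<not> (coin w \<omega> \<and> 2*m < xi0 (int w) \<omega> \<and> xi0 (int w) \<omega> \<le> 4*m)})"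
  define c where "c = ln m / (2*t)"
  define E2 where "E2 = (\<Union>n\<in>{N<..}. {\<omega>\<in>space M. real n * c < xi0 (int n) \<omega>})"
  define E3 where "E3 = (\<Union>(i,d)\<in>{..N::nat}\<times>{1..K::nat}. {\<omega>\<in>space M. m/4 < xi0 (int i) \<omega> \<and> m/4 < xi0 (int (i+d)) \<omega>})"
  define E4 where "E4 = (\<Union>i\<in>{..K::nat}. {\<omega>\<in>space M. m/2 < xi0 (int i) \<omega>})"
  have Jne: "J \<noteq> {}" "finite J" using N'K0 by (auto simp: J_def)
  have Gs: "G \<in> sets M" unfolding G_def using Jne by (intro sets.finite_INT) auto
  have E2s: "E2 \<in> sets M" unfolding E2_def by (intro sets.countable_UN') auto
  have E3s: "E3 \<in> sets M" unfolding E3_def by (intro sets.finite_UN) auto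
  have E4s: "E4 \<in> sets M" unfolding E4_def by (intro sets.finite_UN) auto
  define C where "C = 2 powr (-\<alpha>) - 4 powr (-\<alpha>)"
  have mpow_neg: "m powr (-\<alpha>) = 1/u" using m_pow by (simp add: powr_minus divide_simps)
  have PG: "prob G \<le> exp (- (C / 2) * ((t*L^3 - real K0)/(t*L^2)))"
  proof -
    have "prob G \<le> exp (- (((2*m) powr (-\<alpha>) - (4*m) powr (-\<alpha>)) / 2) * real (card J))"
      unfolding G_def using Jne m4
      by (intro A1_bound) (use K0 in \<open>auto simp: J_def\<close>)
    also have "((2*m) powr (-\<alpha>) - (4*m) powr (-\<alpha>)) = C / u"
      using m0 by (simp add: powr_mult mpow_neg C_def divide_simps)
    also have "exp (- ((C/u) / 2) * real (card J)) \<le> exp (- (C / 2) * ((t*L^3 - real K0)/(t*L^2)))"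
    proof -
      have C0: "C \<ge> 0" unfolding C_def using a0 by (intro diff_ge_0_iff_ge[THEN iffD2] powr_mono2') auto
      have "real (card J) = real N' + 1 - real K0" using N'K0 by (simp add: J_def)
      hence cJ: "real (card J) \<ge> t*L^3 - real K0" using N'_lo by linarith
      have "(C / 2) * ((t*L^3 - real K0)/(t*L^2)) = (C/u/2) * (t*L^3 - real K0)"
        by (simp add: u_def)
      also have "\<dots> \<le> (C/u/2) * real (card J)" using cJ C0 u0 by (intro mult_left_mono) auto
      finally show ?thesis by simp
    qed
    finally show ?thesis .
  qed
  have PE2: "prob E2 \<le> 4*t^2/(t^2*L^2 - 1)"
  proof -
    have c0: "c > 0" unfolding c_def using lnm1 t0 by simp
    have "(real N + 1) * c \<ge> t^2 * L^2 * c" using N_lo c0 by (intro mult_right_mono) auto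
    moreover have "t^2 * L^2 * c = t * L^2 * ln m / 2" unfolding c_def using t0 by (simp add: power2_eq_square)
    moreover have "t * L^2 * ln m \<ge> 3 * 1 * 1" using t3 L1 lnm1
      by (intro mult_mono) (auto simp: one_le_power)
    ultimately have Nc: "(real N + 1) * c \<ge> 1" by linarith
    have "prob E2 \<le> 1 / (c^2 * real N)" unfolding E2_def by (rule A2_bound[OF c0 N1 Nc])
    also have "1 / (c^2 * real N) = 4*t^2 / ((ln m)^2 * real N)"
      unfolding c_def using t0 by (simp add: power2_eq_square divide_simps)
    also have "\<dots> \<le> 4*t^2 / (1 * real N)"
    proof (intro divide_left_mono mult_right_mono)
      show "1 \<le> (ln m)^2" using lnm1 by (simp add: one_le_power)
    qed (use N1 lnm1 in \<open>auto intro!: mult_pos_pos\<close>)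
    also have "\<dots> \<le> 4*t^2/(t^2*L^2 - 1)"
      using N_lo tL2 by (intro divide_left_mono) auto
    finally show ?thesis .
  qed
  have PE3: "prob E3 \<le> (t^2*L^2+1) * real K * (4 powr \<alpha>)^2 / (t^2*L^4)"
  proof -
    have "prob E3 \<le> (real N + 1) * real K * ((m/4) powr (-\<alpha>))^2"
      unfolding E3_def using m4 by (intro A3_bound) auto
    also have "(m/4) powr (-\<alpha>) = 4 powr \<alpha> / u"
      using m0 u0 m_pow by (simp add: powr_divide mpow_neg powr_minus divide_simps)
    also have "(real N + 1) * real K * (4 powr \<alpha> / u)^2 \<le> (t^2*L^2+1) * real K * (4 powr \<alpha> / u)^2"
      using N_lo by (intro mult_right_mono) auto
    also have "(t^2*L^2+1) * real K * (4 powr \<alpha> / u)^2 = (t^2*L^2+1) * real K * (4 powr \<alpha>)^2 / (t^2*L^4)"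
      by (simp add: u_def power_divide power_mult_distrib power2_eq_square)
        (simp add: power_def)
    finally show ?thesis .
  qed
  have PE4: "prob E4 \<le> (real K + 1) * 2 powr \<alpha> / (t*L^2)"
  proof -
    have "prob E4 \<le> (real K + 1) * (m/2) powr (-\<alpha>)"
      unfolding E4_def using m4 by (intro A4_bound) auto
    also have "(m/2) powr (-\<alpha>) = 2 powr \<alpha> / u"
      using m0 u0 m_pow by (simp add: powr_divide mpow_neg powr_minus divide_simps)
    finally show ?thesis by (simp add: u_def)
  qed
  define U where "U = G \<union> E2 \<union> E3 \<union> E4"
  have Us: "U \<in> sets M" unfolding U_def using Gs E2s E3s E4s by auto
  have PU: "prob U \<le> Fb \<alpha> K0 t"
  proof -
    have "prob U \<le> prob G + prob E2 + prob E3 + prob E4"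
    proof -
      have "prob U \<le> prob (G \<union> E2 \<union> E3) + prob E4" unfolding U_def
        using Gs E2s E3s E4s by (intro measure_Un_le) auto
      moreover have "prob (G \<union> E2 \<union> E3) \<le> prob (G \<union> E2) + prob E3"
        using Gs E2s E3s by (intro measure_Un_le) auto
      moreover have "prob (G \<union> E2) \<le> prob G + prob E2"
        using Gs E2s by (intro measure_Un_le) auto
      ultimately show ?thesis by linarith
    qed
    also have "\<dots> \<le> Fb \<alpha> K0 t"
      using PG PE2 PE3 PE4 unfolding Fb_def C_def K_def L_def by linarith
    finally show ?thesis .
  qed
  define T where "T = {\<omega> \<in> space M. \<forall>z::int.
             0 < \<bar>z - Z \<omega>\<bar> \<and> real_of_int \<bar>z - Z \<omega>\<bar> \<le> \<alpha> \<longrightarrow>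
               2 * xi xi0 coin \<omega> z < xi xi0 coin \<omega> (Z \<omega>)}"
  have Ts: "T \<in> sets M"
  proof -
    have "(\<lambda>\<omega>. (\<lambda>i \<omega>. \<forall>z::int. 0 < \<bar>z - i\<bar> \<and> real_of_int \<bar>z - i\<bar> \<le> \<alpha> \<longrightarrow>
               2 * xi xi0 coin \<omega> z < xi xi0 coin \<omega> i) (Z \<omega>) \<omega>) \<in> M \<rightarrow>\<^sub>M count_space UNIV"
      by (rule measurable_compose_countable'[OF _ Zm]) auto
    thus ?thesis unfolding T_def by (simp add: pred_def)
  qed
  have AEimp: "AE \<omega> in M. \<omega> \<in> space M - U \<longrightarrow> \<omega> \<in> T"
    using AE_pos Zmax
  proof eventually_elim
    case (elim \<omega>)
    show ?case
    proof
      assume om: "\<omega> \<in> space M - U"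
      hence sp: "\<omega> \<in> space M" by simp
      from om have nG: "\<omega> \<notin> G" unfolding U_def by simp
      then obtain w where w: "w \<in> J" "coin w \<omega>" "2*m < xi0 (int w) \<omega>" "xi0 (int w) \<omega> \<le> 4*m"
        unfolding G_def using sp by auto
      have w1: "1 \<le> w" "w \<le> N'" using w(1) K0 by (auto simp: J_def)
      have A2: "\<forall>n::nat. N < n \<longrightarrow> \<not> (real n * ln m / (2*t) < xi0 (int n) \<omega>)"
        using om sp unfolding U_def E2_def c_def by auto
      have A3: "\<forall>i::nat. i \<le> N \<longrightarrow> (\<forall>d::nat. 1 \<le> d \<and> d \<le> K \<longrightarrow>
               \<not> (m/4 < xi0 (int i) \<omega> \<and> m/4 < xi0 (int (i+d)) \<omega>))"
        using om sp unfolding U_def E3_def by fastforce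
      have A4: "\<forall>i::nat. i \<le> K \<longrightarrow> \<not> (m/2 < xi0 (int i) \<omega>)"
        using om sp unfolding U_def E4_def by auto
      have "\<forall>z::int. 0 < \<bar>z - Z \<omega>\<bar> \<and> real_of_int \<bar>z - Z \<omega>\<bar> \<le> \<alpha> \<longrightarrow>
           2 * xi xi0 coin \<omega> z < xi xi0 coin \<omega> (Z \<omega>)"
        by (rule det[where xz=xi0 and coin=coin and \<omega>=\<omega> and t=t and m=m and \<alpha>=\<alpha> and N=N and Np=N'
              and K=K and w=w and Zv="Z \<omega>", OF _ t0 m4 _ _ w1 w(2-4) E2c A2 A4 A3 K_def]) (use elim a0 in auto)
      thus "\<omega> \<in> T" unfolding T_def using sp by simp
    qed
  qed
  have "prob (space M - U) \<le> prob T" by (rule finite_measure_mono_AE[OF AEimp Ts])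
  moreover have "prob (space M - U) = 1 - prob U" using Us by (rule prob_compl)
  ultimately show ?thesis using PU unfolding T_def by linarith
qed

end



lemma Fb_lim:
  assumes a: "\<alpha> \<ge> 2"
  shows "((\<lambda>t. Fb \<alpha> K0 t) \<longlongrightarrow> 0) at_top"
proof -
  define C where "C = 2 powr (-\<alpha>) - 4 powr (-\<alpha>)"
  have C0: "C > 0" unfolding C_def using a by (simp add: powr_less_mono2_neg)
  have g: "filterlim (\<lambda>t::real. (t*(ln t)^3 - real K0)/(t*(ln t)^2)) at_top at_top" by real_asymp
  have "filterlim (\<lambda>t. (- (C/2)) * ((t*(ln t)^3 - real K0)/(t*(ln t)^2))) at_bot at_top"
    by (rule filterlim_tendsto_neg_mult_at_bot[OF tendsto_const _ g]) (use C0 in simp)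
  hence e: "((\<lambda>t. exp (- (C/2) * ((t*(ln t)^3 - real K0)/(t*(ln t)^2)))) \<longlongrightarrow> 0) at_top"
    by (rule filterlim_compose[OF exp_at_bot])
  have l2: "((\<lambda>t::real. 4*t^2/(t^2*(ln t)^2 - 1)) \<longlongrightarrow> 0) at_top" by real_asymp
  have l3: "((\<lambda>t::real. (t^2*(ln t)^2+1) * real (nat \<lfloor>\<alpha>\<rfloor>) * (4 powr \<alpha>)^2 / (t^2*(ln t)^4)) \<longlongrightarrow> 0) at_top"
    by real_asymp
  have l4: "((\<lambda>t::real. (real (nat \<lfloor>\<alpha>\<rfloor>) + 1) * 2 powr \<alpha> / (t*(ln t)^2)) \<longlongrightarrow> 0) at_top"
    by real_asymp
  have "((\<lambda>t. exp (- (C/2) * ((t*(ln t)^3 - real K0)/(t*(ln t)^2))) + 4*t^2/(t^2*(ln t)^2 - 1)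
     + (t^2*(ln t)^2+1) * real (nat \<lfloor>\<alpha>\<rfloor>) * (4 powr \<alpha>)^2 / (t^2*(ln t)^4)
     + (real (nat \<lfloor>\<alpha>\<rfloor>) + 1) * 2 powr \<alpha> / (t*(ln t)^2)) \<longlongrightarrow> 0 + 0 + 0 + 0) at_top"
    by (intro tendsto_add e l2 l3 l4)
  thus ?thesis unfolding Fb_def C_def by simp
qed

theorem lemma6p2:
  fixes M :: "'a measure" and \<alpha> :: real
    and xi0 :: "int \<Rightarrow> 'a \<Rightarrow> real" and coin :: "nat \<Rightarrow> 'a \<Rightarrow> bool"
    and p :: "nat \<Rightarrow> real" and Z1 :: "real \<Rightarrow> 'a \<Rightarrow> int"
  assumes "prob_space M"
    and alpha: "\<alpha> \<ge> 2"
    and p_range: "\<And>n. 0 \<le> p n \<and> p n \<le> 1"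
    and p_mono: "\<exists>N. \<forall>m n. N \<le> m \<and> m \<le> n \<longrightarrow> p m \<le> p n"
    and p_lim: "p \<longlonglongrightarrow> 1"
    and indep: "prob_space.indep_vars M (\<lambda>_. borel)
          (\<lambda>i. case i of Inl z \<Rightarrow> xi0 z | Inr n \<Rightarrow> (\<lambda>\<omega>. of_bool (coin n \<omega>) :: real))
          (UNIV :: (int + nat) set)"
    and pareto: "\<And>z x. x \<ge> 1 \<Longrightarrow>
          measure M {\<omega> \<in> space M. xi0 z \<omega> > x} = x powr (- \<alpha>)"
    and coin_prob: "\<And>n. n \<ge> 1 \<Longrightarrow> measure M {\<omega> \<in> space M. coin n \<omega>} = p n"
    and Z1_meas: "\<And>t. t > 0 \<Longrightarrow> Z1 t \<in> M \<rightarrow>\<^sub>M count_space UNIV"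
    and Z1_max: "\<And>t. t > 0 \<Longrightarrow> AE \<omega> in M. Z1 t \<omega> \<in> Dset xi0 coin \<omega> \<and>
          (\<forall>y \<in> Dset xi0 coin \<omega>. Psi xi0 coin t \<omega> y \<le> Psi xi0 coin t \<omega> (Z1 t \<omega>))"
  shows "((\<lambda>t. measure M {\<omega> \<in> space M. \<forall>z::int.
             0 < \<bar>z - Z1 t \<omega>\<bar> \<and> real_of_int \<bar>z - Z1 t \<omega>\<bar> \<le> \<alpha> \<longrightarrow>
               2 * xi xi0 coin \<omega> z < xi xi0 coin \<omega> (Z1 t \<omega>)})
          \<longlongrightarrow> 1) at_top"
proof -
  interpret S: setting M \<alpha> xi0 coin
    by (intro setting.intro setting_axioms.intro) (simp_all add: assms)
  have "\<forall>\<^sub>F n in sequentially. 1/2 < p n" by (rule order_tendstoD(1)[OF p_lim]) simp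
  then obtain N0 where N0: "\<And>n. n \<ge> N0 \<Longrightarrow> 1/2 < p n" unfolding eventually_sequentially by blast
  define K0 where "K0 = max 1 N0"
  have K0: "K0 \<ge> 1" "\<forall>n\<ge>K0. S.prob {\<omega>\<in>space M. coin n \<omega>} \<ge> 1/2"
    using N0 coin_prob by (auto simp: K0_def less_imp_le)
  have a0: "\<alpha> > 0" using alpha by simp
  have "((\<lambda>y::real. (ln y)^3 * ln (4*y) / y) \<longlongrightarrow> 0) at_top" by real_asymp
  hence "\<forall>\<^sub>F y in at_top. (ln y)^3 * ln (4*y) / y < 1/\<alpha>^3"
    by (rule order_tendstoD(2)) (use a0 in simp)
  moreover have "\<forall>\<^sub>F y in at_top. (y::real) \<ge> 1" by (rule eventually_ge_at_top)
  ultimately have "\<forall>\<^sub>F y in at_top. y \<ge> 1 \<and> \<alpha>^3 * (ln y)^3 * ln (4*y) \<le> y"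
  proof eventually_elim
    case (elim y)
    hence "(ln y)^3 * ln (4*y) < y / \<alpha>^3" using a0 by (simp add: divide_simps mult.commute)
    hence "\<alpha>^3 * ((ln y)^3 * ln (4*y)) < y" using a0 by (simp add: divide_simps mult.commute)
    thus ?case using elim by (simp add: mult.assoc)
  qed
  then obtain Y0 where Y0: "\<And>y. y \<ge> Y0 \<Longrightarrow> y \<ge> 1 \<and> \<alpha>^3 * (ln y)^3 * ln (4*y) \<le> y"
    unfolding eventually_at_top_linorder by blast
  define Y where "Y = max 1 Y0"
  have Y: "Y \<ge> 1" "\<forall>y\<ge>Y. \<alpha>^3 * (ln y)^3 * ln (4*y) \<le> y" using Y0 by (auto simp: Y_def)
  define T0 where "T0 = max (max (exp 1) (4 powr \<alpha>)) (max (Y powr \<alpha>) (real K0 + 2))"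
  have lower: "\<forall>\<^sub>F t in at_top. 1 - Fb \<alpha> K0 t \<le> measure M {\<omega> \<in> space M. \<forall>z::int.
             0 < \<bar>z - Z1 t \<omega>\<bar> \<and> real_of_int \<bar>z - Z1 t \<omega>\<bar> \<le> \<alpha> \<longrightarrow>
               2 * xi xi0 coin \<omega> z < xi xi0 coin \<omega> (Z1 t \<omega>)}"
    using eventually_ge_at_top[of T0]
  proof eventually_elim
    case (elim t)
    have t: "t \<ge> exp 1" "t \<ge> 4 powr \<alpha>" "t \<ge> Y powr \<alpha>" "t \<ge> real K0 + 2"
      using elim by (auto simp: T0_def)
    have t0: "t > 0" using t(4) by simp
    show ?case by (rule S.main_bound[OF K0 Y t Z1_meas[OF t0] Z1_max[OF t0]])
  qed
  have upper: "\<forall>\<^sub>F t in at_top. measure M {\<omega> \<in> space M. \<forall>z::int.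
             0 < \<bar>z - Z1 t \<omega>\<bar> \<and> real_of_int \<bar>z - Z1 t \<omega>\<bar> \<le> \<alpha> \<longrightarrow>
               2 * xi xi0 coin \<omega> z < xi xi0 coin \<omega> (Z1 t \<omega>)} \<le> 1"
    by (intro always_eventually allI S.prob_le_1)
  have lim1: "((\<lambda>t. 1 - Fb \<alpha> K0 t) \<longlongrightarrow> 1) at_top"
    using tendsto_diff[OF tendsto_const Fb_lim[OF alpha]] by simp
  show ?thesis by (rule tendsto_sandwich[OF lower upper lim1 tendsto_const])
qed


end
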